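(* Let $N\ge 1$, let $\mathcal{A}$ be a collection of subsets of $\{1,\dots,N\}$ with $\emptyset\in\mathcal{A}$, which is downward closed (if $A\in\mathcal{A}$ and $B\subseteq A$ then $B\in\mathcal{A}$) and such that every buyer $n$ belongs to some $A\in\mathcal{A}$. Then for every $r>1$, the worst case efficiency loss ratio for binary valued buyers satisfies $$\eta(r,2;\mathcal{A})\le \frac{r-1}{2r-1}\le \frac12 .$$
   Context: Model: buyers $n\in\{1,\dots,N\}$; $\mathcal{A}$ is the collection of feasible sets of winners. Buyer $n$'s type $X_n$ is a discrete random variable taking values $0<x_n^1<\dots<x_n^{K_n}$ with probabilities $p_n^i=\Pr[X_n=x_n^i]>0$; $X_1,\dots,X_N$ are independent. An allocation rule $\pi$ maps each bid vector $v=(v_1,\dots,v_N)$, $v_n\in\{x_n^1,\dots,x_n^{K_n}\}$, to a probability distribution $(\pi_A(v))_{A\in\mathcal{A}}$ on $\mathcal{A}$; set $Q_n(v)=\sum_{A\in\mathcal{A}:n\in A}\pi_A(v)$. Virtual valuation: $w_n(x_n^i)=x_n^i-(x_n^{i+1}-x_n^i)\frac{\sum_{j=i+1}^{K_n}p_n^j}{p_n^i}$ for $i<K_n$, and $w_n(x_n^{K_n})=x_n^{K_n}$. Monotone virtual valuation $\overline{w}_n$: let $(g_n^0,h_n^0)=(0,-x_n^1)$, $(g_n^i,h_n^i)=(\sum_{j\le i}p_n^j,\,-x_n^{i+1}\sum_{j>i}p_n^j)$ for $1\le i\le K_n-1$, $(g_n^{K_n},h_n^{K_n})=(1,0)$;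 let $\overline{h}_n^i$ be the value at $g_n^i$ of the lower convex hull of these points, and $\overline{w}_n(x_n^i)=(\overline{h}_n^i-\overline{h}_n^{i-1})/(g_n^i-g_n^{i-1})$. (For binary types $\{L_n,H_n\}$ with $\Pr[X_n=H_n]=p_n$ this gives $\overline{w}_n(H_n)=H_n$, $\overline{w}_n(L_n)=(L_n-p_nH_n)/(1-p_n)$; for a single-valued type, $\overline{w}_n(x_n^1)=x_n^1$.) An allocation rule is optimal (i.e. it is the allocation rule of a revenue-maximizing Bayesian incentive compatible, individually rational direct mechanism) if for every $v$, $\pi(v)$ is supported on $\arg\max_{A\in\mathcal{A}}\sum_{n\in A}\overline{w}_n(v_n)$, with consistent tie-breaking: if $v_n<v_n'$ and $\overline{w}_n(v_n)=\overline{w}_n(v_n')$ then $Q_n(v_n,v_{-n})\le Q_n(v_n',v_{-n})$ for all $v_{-n}$. Let $\tilde\pi^o$ be an optimal allocation rule maximizing the realized welfare $\mathbb{E}[\sum_n Q_n(X)X_n]$ among all optimal allocation rules. $\mathrm{MSW}=\mathbb{E}[\max_{A\in\mathcal{A}}\sum_{n\in A}X_n]$, and $\mathrm{ELR}(\pi)=(\mathrm{MSW}-\mathbb{E}[\sum_nQ_n(X)X_n])/\mathrm{MSW}$. $\mathcal{D}_{r,K}$ is the set of all such type distributions with $K_n\le K$ for all $n$, $x_n^1>0$, $p_n^i>0$, and $(\max_n x_n^{K_n})/(\min_n x_n^1)\le r$. The worst case ELR is $\eta(r,K;\mathcal{A})=\sup_{\mathcal{D}_{r,K}}\mathrm{ELR}(\tilde\pi^o)$.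 *)

theory Defs
  imports "HOL-Library.FuncSet" Complex_Main
begin

text \<open>
A type distribution is given by
  Kf n  (number of type values of buyer n),
  x n i (the i-th value, i = 1..Kf n, strictly increasing),
  p n i (its probability).
An allocation rule maps bid vectors to a function on sets of buyers
(a probability vector on the feasible collection calA).
\<close>

definition supp :: "(nat \<Rightarrow> nat) \<Rightarrow> (nat \<Rightarrow> nat \<Rightarrow> real) \<Rightarrow> nat \<Rightarrow> real set" where
  "supp Kf x n = x n ` {1..Kf n}"

definition profiles :: "nat \<Rightarrow> (nat \<Rightarrow> nat) \<Rightarrow> (nat \<Rightarrow> nat \<Rightarrow> real) \<Rightarrow> (nat \<Rightarrow> real) set" where
  "profiles N Kf x = PiE {1..N} (\<lambda>n. supp Kf x n)"

definition idx :: "(nat \<Rightarrow> nat) \<Rightarrow> (nat \<Rightarrow> nat \<Rightarrow> real) \<Rightarrow> nat \<Rightarrow> real \<Rightarrow> nat" where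
  "idx Kf x n y = (THE i. i \<in> {1..Kf n} \<and> x n i = y)"

definition pr1 :: "(nat \<Rightarrow> nat) \<Rightarrow> (nat \<Rightarrow> nat \<Rightarrow> real) \<Rightarrow> (nat \<Rightarrow> nat \<Rightarrow> real) \<Rightarrow> nat \<Rightarrow> real \<Rightarrow> real" where
  "pr1 Kf x p n y = p n (idx Kf x n y)"

text \<open>Pr[X = v], by independence\<close>
definition prob_prof :: "nat \<Rightarrow> (nat \<Rightarrow> nat) \<Rightarrow> (nat \<Rightarrow> nat \<Rightarrow> real) \<Rightarrow> (nat \<Rightarrow> nat \<Rightarrow> real) \<Rightarrow> (nat \<Rightarrow> real) \<Rightarrow> real" where
  "prob_prof N Kf x p v = (\<Prod>n\<in>{1..N}. pr1 Kf x p n (v n))"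

definition valid_dist :: "nat \<Rightarrow> real \<Rightarrow> nat \<Rightarrow> (nat \<Rightarrow> nat) \<Rightarrow> (nat \<Rightarrow> nat \<Rightarrow> real) \<Rightarrow> (nat \<Rightarrow> nat \<Rightarrow> real) \<Rightarrow> bool" where
  "valid_dist N r K Kf x p \<longleftrightarrow>
     (\<forall>n\<in>{1..N}. 1 \<le> Kf n \<and> Kf n \<le> K \<and> 0 < x n 1
        \<and> (\<forall>i j. 1 \<le> i \<longrightarrow> i < j \<longrightarrow> j \<le> Kf n \<longrightarrow> x n i < x n j)
        \<and> (\<forall>i\<in>{1..Kf n}. 0 < p n i)
        \<and> (\<Sum>i=1..Kf n. p n i) = 1)
     \<and> Max ((\<lambda>n. x n (Kf n)) ` {1..N}) / Min ((\<lambda>n. x n 1) ` {1..N}) \<le> r"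

definition gpt :: "(nat \<Rightarrow> nat) \<Rightarrow> (nat \<Rightarrow> nat \<Rightarrow> real) \<Rightarrow> nat \<Rightarrow> nat \<Rightarrow> real" where
  "gpt Kf p n i = (if i = 0 then 0 else if i < Kf n then (\<Sum>j=1..i. p n j) else 1)"

definition hpt :: "(nat \<Rightarrow> nat) \<Rightarrow> (nat \<Rightarrow> nat \<Rightarrow> real) \<Rightarrow> (nat \<Rightarrow> nat \<Rightarrow> real) \<Rightarrow> nat \<Rightarrow> nat \<Rightarrow> real" where
  "hpt Kf x p n i = (if i = 0 then - x n 1
                     else if i < Kf n then - x n (i+1) * (\<Sum>j=i+1..Kf n. p n j) else 0)"

text \<open>Value at g_n^i of the lower convex hull of the points (g_n^j, h_n^j), j = 0..K_n\<close>
definition hbar :: "(nat \<Rightarrow> nat) \<Rightarrow> (nat \<Rightarrow> nat \<Rightarrow> real) \<Rightarrow> (nat \<Rightarrow> nat \<Rightarrow> real) \<Rightarrow> nat \<Rightarrow> nat \<Rightarrow> real" where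
  "hbar Kf x p n i = Inf {(\<Sum>j=0..Kf n. l j * hpt Kf x p n j) | l.
        (\<forall>j. 0 \<le> l j) \<and> (\<Sum>j=0..Kf n. l j) = 1
        \<and> (\<Sum>j=0..Kf n. l j * gpt Kf p n j) = gpt Kf p n i}"

text \<open>Monotone virtual valuation, first on indices, then on values\<close>
definition wbar_idx :: "(nat \<Rightarrow> nat) \<Rightarrow> (nat \<Rightarrow> nat \<Rightarrow> real) \<Rightarrow> (nat \<Rightarrow> nat \<Rightarrow> real) \<Rightarrow> nat \<Rightarrow> nat \<Rightarrow> real" where
  "wbar_idx Kf x p n i = (hbar Kf x p n i - hbar Kf x p n (i-1)) / (gpt Kf p n i - gpt Kf p n (i-1))"

definition wbar :: "(nat \<Rightarrow> nat) \<Rightarrow> (nat \<Rightarrow> nat \<Rightarrow> real) \<Rightarrow> (nat \<Rightarrow> nat \<Rightarrow> real) \<Rightarrow> nat \<Rightarrow> real \<Rightarrow> real" where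
  "wbar Kf x p n y = wbar_idx Kf x p n (idx Kf x n y)"

definition alloc_rule :: "nat \<Rightarrow> nat set set \<Rightarrow> (nat \<Rightarrow> nat) \<Rightarrow> (nat \<Rightarrow> nat \<Rightarrow> real)
     \<Rightarrow> ((nat \<Rightarrow> real) \<Rightarrow> nat set \<Rightarrow> real) \<Rightarrow> bool" where
  "alloc_rule N calA Kf x \<pi> \<longleftrightarrow>
     (\<forall>v\<in>profiles N Kf x. (\<forall>A. 0 \<le> \<pi> v A) \<and> (\<forall>A. A \<notin> calA \<longrightarrow> \<pi> v A = 0)
        \<and> (\<Sum>A\<in>calA. \<pi> v A) = 1)"

definition Qn :: "nat set set \<Rightarrow> ((nat \<Rightarrow> real) \<Rightarrow> nat set \<Rightarrow> real) \<Rightarrow> nat \<Rightarrow> (nat \<Rightarrow> real) \<Rightarrow> real" where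
  "Qn calA \<pi> n v = (\<Sum>A\<in>{A\<in>calA. n \<in> A}. \<pi> v A)"

definition optimal_rule :: "nat \<Rightarrow> nat set set \<Rightarrow> (nat \<Rightarrow> nat) \<Rightarrow> (nat \<Rightarrow> nat \<Rightarrow> real) \<Rightarrow> (nat \<Rightarrow> nat \<Rightarrow> real)
     \<Rightarrow> ((nat \<Rightarrow> real) \<Rightarrow> nat set \<Rightarrow> real) \<Rightarrow> bool" where
  "optimal_rule N calA Kf x p \<pi> \<longleftrightarrow>
     alloc_rule N calA Kf x \<pi> \<and>
     (\<forall>v\<in>profiles N Kf x.
        (\<forall>A\<in>calA. 0 < \<pi> v A \<longrightarrow>
            (\<forall>B\<in>calA. (\<Sum>n\<in>B. wbar Kf x p n (v n)) \<le> (\<Sum>n\<in>A. wbar Kf x p n (v n))))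
      \<and> (\<forall>n\<in>{1..N}. \<forall>y\<in>supp Kf x n.
            v n < y \<and> wbar Kf x p n (v n) = wbar Kf x p n y
              \<longrightarrow> Qn calA \<pi> n v \<le> Qn calA \<pi> n (v(n := y))))"

definition welfare :: "nat \<Rightarrow> nat set set \<Rightarrow> (nat \<Rightarrow> nat) \<Rightarrow> (nat \<Rightarrow> nat \<Rightarrow> real) \<Rightarrow> (nat \<Rightarrow> nat \<Rightarrow> real)
     \<Rightarrow> ((nat \<Rightarrow> real) \<Rightarrow> nat set \<Rightarrow> real) \<Rightarrow> real" where
  "welfare N calA Kf x p \<pi> =
     (\<Sum>v\<in>profiles N Kf x. prob_prof N Kf x p v * (\<Sum>n\<in>{1..N}. Qn calA \<pi> n v * v n))"

definition MSW :: "nat \<Rightarrow> nat set set \<Rightarrow> (nat \<Rightarrow> nat) \<Rightarrow> (nat \<Rightarrow> nat \<Rightarrow> real) \<Rightarrow> (nat \<Rightarrow> nat \<Rightarrow> real) \<Rightarrow> real" where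
  "MSW N calA Kf x p =
     (\<Sum>v\<in>profiles N Kf x. prob_prof N Kf x p v * (MAX A\<in>calA. \<Sum>n\<in>A. v n))"

definition ELR :: "nat \<Rightarrow> nat set set \<Rightarrow> (nat \<Rightarrow> nat) \<Rightarrow> (nat \<Rightarrow> nat \<Rightarrow> real) \<Rightarrow> (nat \<Rightarrow> nat \<Rightarrow> real)
     \<Rightarrow> ((nat \<Rightarrow> real) \<Rightarrow> nat set \<Rightarrow> real) \<Rightarrow> real" where
  "ELR N calA Kf x p \<pi> = (MSW N calA Kf x p - welfare N calA Kf x p \<pi>) / MSW N calA Kf x p"

definition welfare_max_optimal :: "nat \<Rightarrow> nat set set \<Rightarrow> (nat \<Rightarrow> nat) \<Rightarrow> (nat \<Rightarrow> nat \<Rightarrow> real) \<Rightarrow> (nat \<Rightarrow> nat \<Rightarrow> real)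
     \<Rightarrow> ((nat \<Rightarrow> real) \<Rightarrow> nat set \<Rightarrow> real) \<Rightarrow> bool" where
  "welfare_max_optimal N calA Kf x p \<pi> \<longleftrightarrow>
     optimal_rule N calA Kf x p \<pi> \<and>
     (\<forall>\<pi>'. optimal_rule N calA Kf x p \<pi>' \<longrightarrow> welfare N calA Kf x p \<pi>' \<le> welfare N calA Kf x p \<pi>)"

definition eta :: "nat \<Rightarrow> nat set set \<Rightarrow> real \<Rightarrow> nat \<Rightarrow> real" where
  "eta N calA r K = Sup {ELR N calA Kf x p \<pi> | Kf x p \<pi>.
       valid_dist N r K Kf x p \<and> welfare_max_optimal N calA Kf x p \<pi>}"

end

theory Submission imports Defs "HOL-Library.FuncSet" Complex_Main begin


lemma idx_eq:
  assumes "\<forall>i j. 1 \<le> i \<longrightarrow> i < j \<longrightarrow> j \<le> Kf n \<longrightarrow> x n i < x n j" "i \<in> {1..Kf n}"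
  shows "idx Kf x n (x n i) = i"
  unfolding idx_def
proof (rule the_equality)
  show "i \<in> {1..Kf n} \<and> x n i = x n i" using assms by auto
next
  fix j assume j: "j \<in> {1..Kf n} \<and> x n j = x n i"
  show "j = i"
  proof (rule ccontr)
    assume "j \<noteq> i"
    then have "j < i \<or> i < j" by auto
    then show False using assms j by (metis atLeastAtMost_iff less_irrefl)
  qed
qed

lemma hbar_K1:
  assumes "Kf n = 1"
  shows "hbar Kf x p n 0 = - x n 1" "hbar Kf x p n 1 = 0"
proof -
  have g: "gpt Kf p n 0 = 0" "gpt Kf p n 1 = 1" using assms by (auto simp: gpt_def)
  have h: "hpt Kf x p n 0 = - x n 1" "hpt Kf x p n 1 = 0" using assms by (auto simp: hpt_def)
  show "hbar Kf x p n 0 = - x n 1"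
    unfolding hbar_def
  proof (rule cInf_eq_minimum)
    show "- x n 1 \<in> {(\<Sum>j=0..Kf n. l j * hpt Kf x p n j) | l.
        (\<forall>j. 0 \<le> l j) \<and> (\<Sum>j=0..Kf n. l j) = 1
        \<and> (\<Sum>j=0..Kf n. l j * gpt Kf p n j) = gpt Kf p n 0}"
      using assms g h by (auto intro!: exI[of _ "\<lambda>j. if j = 0 then 1 else 0"])
  next
    fix y assume "y \<in> {(\<Sum>j=0..Kf n. l j * hpt Kf x p n j) | l.
        (\<forall>j. 0 \<le> l j) \<and> (\<Sum>j=0..Kf n. l j) = 1
        \<and> (\<Sum>j=0..Kf n. l j * gpt Kf p n j) = gpt Kf p n 0}"
    then show "- x n 1 \<le> y" using assms g h by auto
  qed
  show "hbar Kf x p n 1 = 0"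
    unfolding hbar_def
  proof (rule cInf_eq_minimum)
    show "0 \<in> {(\<Sum>j=0..Kf n. l j * hpt Kf x p n j) | l.
        (\<forall>j. 0 \<le> l j) \<and> (\<Sum>j=0..Kf n. l j) = 1
        \<and> (\<Sum>j=0..Kf n. l j * gpt Kf p n j) = gpt Kf p n 1}"
      using assms g h by (auto intro!: exI[of _ "\<lambda>j. if j = 1 then 1 else 0"])
  next
    fix y assume "y \<in> {(\<Sum>j=0..Kf n. l j * hpt Kf x p n j) | l.
        (\<forall>j. 0 \<le> l j) \<and> (\<Sum>j=0..Kf n. l j) = 1
        \<and> (\<Sum>j=0..Kf n. l j * gpt Kf p n j) = gpt Kf p n 1}"
    then show "0 \<le> y" using assms g h by auto
  qed
qed

lemma wbar_K1:
  assumes "Kf n = 1"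
  shows "wbar_idx Kf x p n 1 = x n 1"
  using hbar_K1[of Kf n x p, OF assms] assms by (simp add: wbar_idx_def gpt_def)

lemma sum02: "(\<Sum>j=0..(2::nat). f j) = f 0 + f 1 + (f 2 :: real)"
  by (simp add: numeral_2_eq_2)

lemma hbar_K2:
  assumes K: "Kf n = 2" and p1: "0 < p n 1" and p2: "0 < p n 2" and ps: "p n 1 + p n 2 = 1"
    and LH: "x n 1 < x n 2"
  shows "hbar Kf x p n 0 = - x n 1" "hbar Kf x p n 1 = - x n 2 * p n 2" "hbar Kf x p n 2 = 0"
proof -
  have g: "gpt Kf p n 0 = 0" "gpt Kf p n 1 = p n 1" "gpt Kf p n 2 = 1" using K by (auto simp: gpt_def)
  have h: "hpt Kf x p n 0 = - x n 1" "hpt Kf x p n 1 = - x n 2 * p n 2" "hpt Kf x p n 2 = 0"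
    using K by (auto simp: hpt_def numeral_2_eq_2)
  show "hbar Kf x p n 0 = - x n 1"
    unfolding hbar_def
  proof (rule cInf_eq_minimum)
    show "- x n 1 \<in> {(\<Sum>j=0..Kf n. l j * hpt Kf x p n j) | l.
        (\<forall>j. 0 \<le> l j) \<and> (\<Sum>j=0..Kf n. l j) = 1
        \<and> (\<Sum>j=0..Kf n. l j * gpt Kf p n j) = gpt Kf p n 0}"
      using K g h by (auto simp: sum02 intro!: exI[of _ "\<lambda>j. if j = 0 then 1 else 0"])
  next
    fix y assume "y \<in> {(\<Sum>j=0..Kf n. l j * hpt Kf x p n j) | l.
        (\<forall>j. 0 \<le> l j) \<and> (\<Sum>j=0..Kf n. l j) = 1
        \<and> (\<Sum>j=0..Kf n. l j * gpt Kf p n j) = gpt Kf p n 0}"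
    then obtain l :: "nat \<Rightarrow> real" where l: "\<forall>j. 0 \<le> l j" "l 0 + l 1 + l 2 = 1" "l 1 * p n 1 + l 2 = 0"
      and y: "y = l 0 * (- x n 1) + l 1 * (- x n 2 * p n 2)"
      using K g h by (auto simp: sum02)
    have "l 1 * p n 1 \<ge> 0" using l p1 by simp
    then have "l 2 = 0" "l 1 * p n 1 = 0" using l by (smt (verit))+
    then have "l 1 = 0" using p1 by simp
    then show "- x n 1 \<le> y" using y l \<open>l 2 = 0\<close> by simp
  qed
  show "hbar Kf x p n 1 = - x n 2 * p n 2"
    unfolding hbar_def
  proof (rule cInf_eq_minimum)
    show "- x n 2 * p n 2 \<in> {(\<Sum>j=0..Kf n. l j * hpt Kf x p n j) | l.
        (\<forall>j. 0 \<le> l j) \<and> (\<Sum>j=0..Kf n. l j) = 1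
        \<and> (\<Sum>j=0..Kf n. l j * gpt Kf p n j) = gpt Kf p n 1}"
      using K g h by (auto simp: sum02 intro!: exI[of _ "\<lambda>j. if j = 1 then 1 else 0"])
  next
    fix y assume "y \<in> {(\<Sum>j=0..Kf n. l j * hpt Kf x p n j) | l.
        (\<forall>j. 0 \<le> l j) \<and> (\<Sum>j=0..Kf n. l j) = 1
        \<and> (\<Sum>j=0..Kf n. l j * gpt Kf p n j) = gpt Kf p n 1}"
    then obtain l :: "nat \<Rightarrow> real" where l: "\<forall>j. 0 \<le> l j" "l 0 + l 1 + l 2 = 1" "l 1 * p n 1 + l 2 = p n 1"
      and y: "y = l 0 * (- x n 1) + l 1 * (- x n 2 * p n 2)"
      using K g h by (auto simp: sum02)
    have x1pos: "l 0 * x n 1 \<le> l 0 * x n 2" using l LH by (simp add: mult_left_mono)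
    have e: "l 0 + l 1 * p n 2 = p n 2"
    proof -
      have "p n 2 = 1 - p n 1" using ps by simp
      then have "l 1 * p n 2 = l 1 - l 1 * p n 1" by (simp add: right_diff_distrib)
      then show ?thesis using l ps by linarith
    qed
    have "y \<ge> - x n 2 * (l 0 + l 1 * p n 2)" using y x1pos by (simp add: algebra_simps)
    then show "- x n 2 * p n 2 \<le> y" using e by simp
  qed
  show "hbar Kf x p n 2 = 0"
    unfolding hbar_def
  proof (rule cInf_eq_minimum)
    show "0 \<in> {(\<Sum>j=0..Kf n. l j * hpt Kf x p n j) | l.
        (\<forall>j. 0 \<le> l j) \<and> (\<Sum>j=0..Kf n. l j) = 1
        \<and> (\<Sum>j=0..Kf n. l j * gpt Kf p n j) = gpt Kf p n 2}"
      using K g h by (auto simp: sum02 intro!: exI[of _ "\<lambda>j. if j = 2 then 1 else 0"])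
  next
    fix y assume "y \<in> {(\<Sum>j=0..Kf n. l j * hpt Kf x p n j) | l.
        (\<forall>j. 0 \<le> l j) \<and> (\<Sum>j=0..Kf n. l j) = 1
        \<and> (\<Sum>j=0..Kf n. l j * gpt Kf p n j) = gpt Kf p n 2}"
    then obtain l :: "nat \<Rightarrow> real" where l: "\<forall>j. 0 \<le> l j" "l 0 + l 1 + l 2 = 1" "l 1 * p n 1 + l 2 = 1"
      and y: "y = l 0 * (- x n 1) + l 1 * (- x n 2 * p n 2)"
      using K g h by (auto simp: sum02)
    have "l 1 * p n 2 = l 1 - l 1 * p n 1" using ps by (metis add_diff_cancel_left' right_diff_distrib mult.right_neutral)
    then have "l 0 + l 1 * p n 2 = 0" using l ps by linarith
    moreover have "l 1 * p n 2 \<ge> 0" using l p2 by simp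
    ultimately have "l 0 = 0" "l 1 * p n 2 = 0" using l by (smt (verit))+
    then have "l 1 = 0" using p2 by simp
    then show "0 \<le> y" using y \<open>l 0 = 0\<close> by simp
  qed
qed

lemma wbar_K2:
  assumes K: "Kf n = 2" and p1: "0 < p n 1" and p2: "0 < p n 2" and ps: "p n 1 + p n 2 = 1"
    and LH: "x n 1 < x n 2"
  shows "wbar_idx Kf x p n 1 = (x n 1 - x n 2 * p n 2) / p n 1"
        "wbar_idx Kf x p n 2 = x n 2"
proof -
  note hb = hbar_K2[of Kf n p x, OF assms]
  have g: "gpt Kf p n 0 = 0" "gpt Kf p n 1 = p n 1" "gpt Kf p n 2 = 1" using K by (auto simp: gpt_def)
  show "wbar_idx Kf x p n 1 = (x n 1 - x n 2 * p n 2) / p n 1"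
    using hb g by (simp add: wbar_idx_def)
  have "1 - p n 1 = p n 2" using ps by simp
  then show "wbar_idx Kf x p n 2 = x n 2"
    using hb g p2 by (simp add: wbar_idx_def)
qed



definition Wv :: "nat set set \<Rightarrow> (nat \<Rightarrow> real) \<Rightarrow> real" where
  "Wv calA v = (MAX C\<in>calA. \<Sum>m\<in>C. v m)"
definition Mset :: "nat set set \<Rightarrow> (nat \<Rightarrow> real) \<Rightarrow> nat set set" where
  "Mset calA v = {C\<in>calA. (\<Sum>m\<in>C. v m) = Wv calA v}"
definition qf :: "nat set set \<Rightarrow> nat \<Rightarrow> (nat \<Rightarrow> real) \<Rightarrow> real" where
  "qf calA n v = real (card {C\<in>Mset calA v. n\<in>C}) / real (card (Mset calA v))"

lemma Wv_ge: "finite calA \<Longrightarrow> C \<in> calA \<Longrightarrow> (\<Sum>m\<in>C. v m) \<le> Wv calA v"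
  unfolding Wv_def by (rule Max_ge) auto

lemma Mset_ne: "finite calA \<Longrightarrow> calA \<noteq> {} \<Longrightarrow> Mset calA v \<noteq> {}"
proof -
  assume a: "finite calA" "calA \<noteq> {}"
  have "Wv calA v \<in> (\<lambda>C. \<Sum>m\<in>C. v m) ` calA" unfolding Wv_def using a by (intro Max_in) auto
  then show ?thesis unfolding Mset_def by auto
qed

lemma Mset_fin: "finite calA \<Longrightarrow> finite (Mset calA v)"
  unfolding Mset_def by auto

lemma qf_avg:
  assumes fin: "finite calA" "calA \<noteq> {}" and sub: "\<forall>C\<in>calA. C \<subseteq> I" and fI: "finite I"
  shows "(\<Sum>n\<in>I. qf calA n v * f n) = (\<Sum>C\<in>Mset calA v. \<Sum>n\<in>C. f n) / real (card (Mset calA v))"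
proof -
  let ?M = "Mset calA v"
  have fM: "finite ?M" using fin(1) by (rule Mset_fin)
  have "(\<Sum>n\<in>I. qf calA n v * f n) = (\<Sum>n\<in>I. (\<Sum>C\<in>{C\<in>?M. n\<in>C}. f n)) / real (card ?M)"
    unfolding qf_def by (simp add: sum_divide_distrib)
  also have "(\<Sum>n\<in>I. (\<Sum>C\<in>{C\<in>?M. n\<in>C}. f n)) = (\<Sum>C\<in>?M. \<Sum>n\<in>{n\<in>I. n\<in>C}. f n)"
    using fI fM by (rule sum.swap_restrict)
  also have "\<dots> = (\<Sum>C\<in>?M. \<Sum>n\<in>C. f n)"
  proof (rule sum.cong)
    fix C assume "C \<in> ?M"
    then have "C \<subseteq> I" using sub unfolding Mset_def by auto
    then have "{n\<in>I. n\<in>C} = C" by auto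
    then show "(\<Sum>n\<in>{n\<in>I. n\<in>C}. f n) = (\<Sum>n\<in>C. f n)" by simp
  qed simp
  finally show ?thesis .
qed

lemma qf_W:
  assumes fin: "finite calA" "calA \<noteq> {}" and sub: "\<forall>C\<in>calA. C \<subseteq> I" and fI: "finite I"
  shows "(\<Sum>n\<in>I. qf calA n v * v n) = Wv calA v"
proof -
  have ne: "Mset calA v \<noteq> {}" using fin by (rule Mset_ne)
  have "(\<Sum>C\<in>Mset calA v. \<Sum>n\<in>C. v n) = (\<Sum>C\<in>Mset calA v. Wv calA v)"
    by (rule sum.cong) (auto simp: Mset_def)
  then show ?thesis using qf_avg[OF assms, of v v] ne Mset_fin[OF fin(1)]
    by (simp add: card_gt_0_iff)
qed

lemma qf_bounds:
  assumes "finite calA" "calA \<noteq> {}"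
  shows "0 \<le> qf calA n v" "qf calA n v \<le> 1"
proof -
  have fM: "finite (Mset calA v)" using assms(1) by (rule Mset_fin)
  have "card {C\<in>Mset calA v. n\<in>C} \<le> card (Mset calA v)" using fM by (intro card_mono) auto
  then show "qf calA n v \<le> 1" unfolding qf_def
    by (auto simp: divide_le_eq_1)
  show "0 \<le> qf calA n v" unfolding qf_def by simp
qed

lemma qf_mono:
  assumes fin: "finite calA" "calA \<noteq> {}" and sub: "\<forall>C\<in>calA. finite C"
    and lt: "v n < w n" and eq: "\<And>m. m \<noteq> n \<Longrightarrow> v m = w m"
  shows "qf calA n v \<le> qf calA n w"
proof (cases "{C\<in>Mset calA v. n\<in>C} = {}")
  case True
  then have "qf calA n v = 0" unfolding qf_def by (simp only: card.empty)
  then show ?thesis using qf_bounds[OF fin, of n w] by simp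
next
  case False
  then obtain C where C: "C \<in> calA" "n \<in> C" "(\<Sum>m\<in>C. v m) = Wv calA v" unfolding Mset_def by auto
  have all: "{C'\<in>Mset calA w. n\<in>C'} = Mset calA w"
  proof (rule ccontr)
    assume "{C'\<in>Mset calA w. n\<in>C'} \<noteq> Mset calA w"
    then obtain C' where C': "C' \<in> calA" "n \<notin> C'" "(\<Sum>m\<in>C'. w m) = Wv calA w"
      unfolding Mset_def by auto
    have "(\<Sum>m\<in>C'. w m) = (\<Sum>m\<in>C'. v m)" using C'(2) eq by (intro sum.cong) (auto, metis)
    also have "\<dots> \<le> Wv calA v" using fin C' by (intro Wv_ge)
    also have "\<dots> = (\<Sum>m\<in>C. v m)" using C by simp
    also have "\<dots> < (\<Sum>m\<in>C. w m)"
    proof -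
      have fC: "finite C" using sub C by auto
      have "(\<Sum>m\<in>C. v m) = v n + (\<Sum>m\<in>C-{n}. v m)" using fC C(2) by (simp add: sum.remove)
      also have "(\<Sum>m\<in>C-{n}. v m) = (\<Sum>m\<in>C-{n}. w m)" using eq by (intro sum.cong) auto
      also have "v n + (\<Sum>m\<in>C-{n}. w m) < w n + (\<Sum>m\<in>C-{n}. w m)" using lt by simp
      also have "\<dots> = (\<Sum>m\<in>C. w m)" using fC C(2) by (simp add: sum.remove)
      finally show ?thesis .
    qed
    also have "\<dots> \<le> Wv calA w" using fin C by (intro Wv_ge)
    finally show False using C' by simp
  qed
  have ne: "Mset calA w \<noteq> {}" using fin by (rule Mset_ne)
  have "qf calA n w = 1" unfolding qf_def all using ne Mset_fin[OF fin(1)] by simp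
  then show ?thesis using qf_bounds[OF fin, of n v] by simp
qed

lemma pointwise:
  fixes \<pi> :: "nat set \<Rightarrow> real" and g v :: "nat \<Rightarrow> real"
  assumes fin: "finite calA" "calA \<noteq> {}" and sub: "\<forall>C\<in>calA. C \<subseteq> I" and fI: "finite I"
    and down: "\<forall>A\<in>calA. \<forall>B. B \<subseteq> A \<longrightarrow> B \<in> calA"
    and pos: "\<forall>A. 0 \<le> \<pi> A" and one: "(\<Sum>A\<in>calA. \<pi> A) = 1"
    and opt: "\<forall>A\<in>calA. 0 < \<pi> A \<longrightarrow> (\<forall>B\<in>calA. (\<Sum>n\<in>B. g n) \<le> (\<Sum>n\<in>A. g n))"
    and gv: "\<forall>n\<in>I. g n \<le> v n"
  shows "(\<Sum>n\<in>I. qf calA n v * max (g n) 0) \<le> (\<Sum>n\<in>I. (\<Sum>A\<in>{A\<in>calA. n \<in> A}. \<pi> A) * v n)"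
proof -
  let ?M = "Mset calA v"
  let ?T = "\<Sum>n\<in>I. qf calA n v * max (g n) 0"
  have fM: "finite ?M" using fin(1) by (rule Mset_fin)
  have ne: "?M \<noteq> {}" using fin by (rule Mset_ne)
  have T: "?T = (\<Sum>C\<in>?M. \<Sum>n\<in>C. max (g n) 0) / real (card ?M)"
    by (rule qf_avg[OF fin sub fI])
  have rhs: "(\<Sum>n\<in>I. (\<Sum>A\<in>{A\<in>calA. n \<in> A}. \<pi> A) * v n) = (\<Sum>A\<in>calA. \<pi> A * (\<Sum>n\<in>A. v n))"
  proof -
    have "(\<Sum>n\<in>I. (\<Sum>A\<in>{A\<in>calA. n \<in> A}. \<pi> A) * v n) = (\<Sum>n\<in>I. (\<Sum>A\<in>{A\<in>calA. n \<in> A}. \<pi> A * v n))"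
      by (simp add: sum_distrib_right)
    also have "\<dots> = (\<Sum>A\<in>calA. \<Sum>n\<in>{n\<in>I. n\<in>A}. \<pi> A * v n)"
      using fI fin(1) by (rule sum.swap_restrict)
    also have "\<dots> = (\<Sum>A\<in>calA. \<pi> A * (\<Sum>n\<in>A. v n))"
    proof (rule sum.cong)
      fix A assume "A \<in> calA"
      then have "{n\<in>I. n\<in>A} = A" using sub by auto
      then show "(\<Sum>n\<in>{n\<in>I. n\<in>A}. \<pi> A * v n) = \<pi> A * (\<Sum>n\<in>A. v n)"
        by (simp add: sum_distrib_left)
    qed simp
    finally show ?thesis .
  qed
  have key: "?T \<le> (\<Sum>n\<in>A. v n)" if A: "A \<in> calA" "0 < \<pi> A" for A
  proof -
    have fA: "finite A" using sub fI A by (meson finite_subset)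
    have "(\<Sum>n\<in>A. g n) \<le> (\<Sum>n\<in>A. v n)" using gv sub A by (intro sum_mono) auto
    have b: "(\<Sum>n\<in>C. max (g n) 0) \<le> (\<Sum>n\<in>A. v n)" if C: "C \<in> ?M" for C
    proof -
      have CA: "C \<in> calA" using C unfolding Mset_def by auto
      have fC: "finite C" using sub fI CA by (meson finite_subset)
      let ?D = "{n\<in>C. 0 \<le> g n}"
      have D: "?D \<in> calA" using down CA by auto
      have "(\<Sum>n\<in>C. max (g n) 0) = (\<Sum>n\<in>?D. g n)"
      proof -
        have "(\<Sum>n\<in>C. max (g n) 0) = (\<Sum>n\<in>C. if 0 \<le> g n then g n else 0)"
          by (intro sum.cong) auto
        also have "\<dots> = (\<Sum>n\<in>?D. g n)" using fC by (simp add: sum.inter_filter)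
        finally show ?thesis .
      qed
      also have "\<dots> \<le> (\<Sum>n\<in>A. g n)" using opt A D by auto
      also have "\<dots> \<le> (\<Sum>n\<in>A. v n)" by fact
      finally show ?thesis .
    qed
    have "(\<Sum>C\<in>?M. \<Sum>n\<in>C. max (g n) 0) \<le> (\<Sum>C\<in>?M. (\<Sum>n\<in>A. v n))"
      using b by (intro sum_mono) auto
    then have "(\<Sum>C\<in>?M. \<Sum>n\<in>C. max (g n) 0) \<le> real (card ?M) * (\<Sum>n\<in>A. v n)" by simp
    moreover have "real (card ?M) > 0" using ne fM by (simp add: card_gt_0_iff)
    ultimately show ?thesis unfolding T by (simp add: divide_le_eq mult.commute)
  qed
  have "?T = (\<Sum>A\<in>calA. \<pi> A * ?T)" using one by (simp add: sum_distrib_right[symmetric])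
  also have "\<dots> \<le> (\<Sum>A\<in>calA. \<pi> A * (\<Sum>n\<in>A. v n))"
  proof (rule sum_mono)
    fix A assume A: "A \<in> calA"
    show "\<pi> A * ?T \<le> \<pi> A * (\<Sum>n\<in>A. v n)"
    proof (cases "\<pi> A = 0")
      case False
      then have "0 < \<pi> A" using pos by (metis order_le_less)
      then show ?thesis using key[OF A] by (simp add: mult_left_mono)
    qed simp
  qed
  finally show ?thesis using rhs by simp
qed



lemma arith_key:
  fixes L H r p1 p2 a b :: real
  assumes L: "0 < L" "L < H" "H \<le> r * L" "1 < r" and p: "0 < p1" "0 < p2" "p1 + p2 = 1"
    and ab: "0 \<le> a" "a \<le> b"
  shows "r * (p1 * a * L + p2 * b * H) \<le> (2*r-1) * (p1 * a * max ((L - H * p2) / p1) 0 + p2 * b * H)"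
proof (cases "L - H * p2 \<ge> 0")
  case True
  have m: "p1 * max ((L - H * p2) / p1) 0 = L - H * p2" using True p by simp
  have b0: "0 \<le> b" using ab by simp
  define br where "br = (r-1)*L - p2*((2*r-1)*H - r*L)"
  have goal: "0 \<le> (r-1)*p2*b*H + a*br"
  proof (cases "br \<ge> 0")
    case True then show ?thesis using ab p L by (simp add: mult_nonneg_nonneg)
  next
    case False
    have "a * br \<ge> b * br" using False ab by (simp add: mult_right_mono_neg)
    moreover have "(r-1)*p2*H + br = (r-1)*L - r*p2*(H-L)" unfolding br_def by (simp add: algebra_simps)
    moreover have "r*p2*(H-L) \<le> (r-1)*L"
    proof -
      have "r*p2*(H-L)*H = r*(H-L)*(p2*H)" by (simp add: algebra_simps)
      also have "\<dots> \<le> r*(H-L)*L" using True L by (intro mult_left_mono) (auto simp: mult.commute)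
      also have "\<dots> \<le> (r-1)*L*H" using L by (simp add: algebra_simps)
      finally have "r*p2*(H-L)*H \<le> ((r-1)*L)*H" by simp
      then show ?thesis using L by (simp add: mult_le_cancel_right)
    qed
    ultimately have "0 \<le> b * ((r-1)*p2*H + br)" using b0 by simp
    then show ?thesis using \<open>a * br \<ge> b * br\<close> by (simp add: algebra_simps)
  qed
  have "(2*r-1) * (p1 * a * max ((L - H * p2) / p1) 0 + p2 * b * H)
        = (2*r-1) * (a * (L - H * p2) + p2 * b * H)" using m by (simp add: mult.assoc mult.left_commute)
  moreover have "(2*r-1) * (a * (L - H * p2) + p2 * b * H) - r * (p1 * a * L + p2 * b * H)
       = (r-1)*p2*b*H + a*br"
  proof -
    have e: "p1 = 1 - p2" using p by simp
    show ?thesis unfolding br_def by (simp only: e) (simp add: algebra_simps)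
  qed
  ultimately show ?thesis using goal by linarith
next
  case False
  then have m: "max ((L - H * p2) / p1) 0 = 0" using p by (simp add: divide_nonpos_pos)
  have "L < p2 * H" using False by (simp add: mult.commute)
  also have "\<dots> \<le> p2 * (r * L)" using L p by (intro mult_left_mono) auto
  finally have rp: "1 < r * p2" using L by (simp add: algebra_simps)
  have "r * p1 * L \<le> (r-1) * L"
  proof -
    have "r * p1 = r - r * p2" using p by (metis add_diff_cancel_right' right_diff_distrib mult.right_neutral)
    then have "r * p1 \<le> r - 1" using rp by simp
    then show ?thesis using L by (intro mult_right_mono) auto
  qed
  also have "(r-1) * L \<le> (r-1) * (p2 * H)" using \<open>L < p2 * H\<close> L by (intro mult_left_mono) auto
  finally have k: "r * p1 * L \<le> (r-1)*p2*H" by (simp add: algebra_simps)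
  have "r * p1 * L * a \<le> (r-1)*p2*H * a" using k ab by (intro mult_right_mono) auto
  also have "\<dots> \<le> (r-1)*p2*H * b" using ab L p by (intro mult_left_mono) auto
  finally have "r * p1 * L * a \<le> (r-1)*p2*H*b" .
  then show ?thesis using m by (simp add: algebra_simps)
qed



lemma sum_PiE_split:
  assumes "n \<in> I"
  shows "(\<Sum>v\<in>PiE I S. f v) = (\<Sum>u\<in>PiE (I-{n}) S. \<Sum>y\<in>S n. f (u(n:=y)))"
proof -
  have I: "I = insert n (I-{n})" using assms by auto
  have "(\<Sum>v\<in>PiE I S. f v) = (\<Sum>v\<in>PiE (insert n (I-{n})) S. f v)" using I by simp
  also have "\<dots> = (\<Sum>v\<in>(\<lambda>(y, g). g(n := y)) ` (S n \<times> PiE (I-{n}) S). f v)"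
    by (simp only: PiE_insert_eq)
  also have "\<dots> = (\<Sum>z\<in>S n \<times> PiE (I-{n}) S. f ((\<lambda>(y, g). g(n := y)) z))"
    by (rule sum.reindex_cong[OF inj_combinator]) auto
  also have "\<dots> = (\<Sum>y\<in>S n. \<Sum>u\<in>PiE (I-{n}) S. f (u(n:=y)))"
    by (simp add: sum.cartesian_product split_def)
  also have "\<dots> = (\<Sum>u\<in>PiE (I-{n}) S. \<Sum>y\<in>S n. f (u(n:=y)))"
    by (rule sum.swap)
  finally show ?thesis .
qed

lemma Qn_swap:
  assumes "finite calA" "\<forall>C\<in>calA. C \<subseteq> I" "finite I"
  shows "(\<Sum>n\<in>I. Qn calA \<pi> n v * v n) = (\<Sum>A\<in>calA. \<pi> v A * (\<Sum>n\<in>A. v n))"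
proof -
  have "(\<Sum>n\<in>I. Qn calA \<pi> n v * v n) = (\<Sum>n\<in>I. (\<Sum>A\<in>{A\<in>calA. n \<in> A}. \<pi> v A * v n))"
    by (simp add: Qn_def sum_distrib_right)
  also have "\<dots> = (\<Sum>A\<in>calA. \<Sum>n\<in>{n\<in>I. n\<in>A}. \<pi> v A * v n)"
    using assms(3,1) by (rule sum.swap_restrict)
  also have "\<dots> = (\<Sum>A\<in>calA. \<pi> v A * (\<Sum>n\<in>A. v n))"
  proof (rule sum.cong)
    fix A assume "A \<in> calA"
    then have "{n\<in>I. n\<in>A} = A" using assms by auto
    then show "(\<Sum>n\<in>{n\<in>I. n\<in>A}. \<pi> v A * v n) = \<pi> v A * (\<Sum>n\<in>A. v n)"
      by (simp add: sum_distrib_left)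
  qed simp
  finally show ?thesis .
qed

lemma welfare_le_MSW:
  assumes "finite calA" "\<forall>C\<in>calA. C \<subseteq> {1..N}" "alloc_rule N calA Kf x \<pi>"
    and Pnn: "\<And>v. v \<in> profiles N Kf x \<Longrightarrow> 0 \<le> prob_prof N Kf x p v"
  shows "welfare N calA Kf x p \<pi> \<le> MSW N calA Kf x p"
  unfolding welfare_def MSW_def
proof (rule sum_mono)
  fix v assume v: "v \<in> profiles N Kf x"
  have al: "\<forall>A. 0 \<le> \<pi> v A" "(\<Sum>A\<in>calA. \<pi> v A) = 1" using assms(3) v unfolding alloc_rule_def by auto
  have "(\<Sum>n\<in>{1..N}. Qn calA \<pi> n v * v n) = (\<Sum>A\<in>calA. \<pi> v A * (\<Sum>n\<in>A. v n))"
    using assms(1,2) by (intro Qn_swap) auto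
  also have "\<dots> \<le> (\<Sum>A\<in>calA. \<pi> v A * Wv calA v)"
    using al assms(1) by (intro sum_mono mult_left_mono Wv_ge) auto
  also have "\<dots> = Wv calA v" using al by (simp add: sum_distrib_right[symmetric])
  finally show "prob_prof N Kf x p v * (\<Sum>n\<in>{1..N}. Qn calA \<pi> n v * v n)
     \<le> prob_prof N Kf x p v * (MAX A\<in>calA. \<Sum>n\<in>A. v n)"
    using Pnn[OF v] unfolding Wv_def by (intro mult_left_mono) auto
qed



lemma main_bound:
  fixes N :: nat and calA :: "nat set set" and r :: real
  assumes N: "N \<ge> 1"
    and sub: "\<forall>A\<in>calA. A \<subseteq> {1..N}"
    and emp: "{} \<in> calA"
    and down: "\<forall>A\<in>calA. \<forall>B. B \<subseteq> A \<longrightarrow> B \<in> calA"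
    and r: "r > 1"
    and vd: "valid_dist N r 2 Kf x p"
    and opt: "optimal_rule N calA Kf x p \<pi>"
  shows "r * MSW N calA Kf x p \<le> (2*r-1) * welfare N calA Kf x p \<pi> \<and> 0 \<le> MSW N calA Kf x p"
proof -
  define I where "I = {1..N::nat}"
  have fI: "finite I" unfolding I_def by simp
  have IN: "I \<noteq> {}" using N unfolding I_def by auto
  have subI: "\<forall>C\<in>calA. C \<subseteq> I" using sub unfolding I_def by simp
  have fA: "finite calA" using subI fI by (meson Pow_iff finite_Pow_iff finite_subset subsetI)
  have neA: "calA \<noteq> {}" using emp by auto
  have vdd: "\<forall>n\<in>I. 1 \<le> Kf n \<and> Kf n \<le> 2 \<and> 0 < x n 1
        \<and> (\<forall>i j. 1 \<le> i \<longrightarrow> i < j \<longrightarrow> j \<le> Kf n \<longrightarrow> x n i < x n j)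
        \<and> (\<forall>i\<in>{1..Kf n}. 0 < p n i)
        \<and> (\<Sum>i=1..Kf n. p n i) = 1"
    and ratio: "Max ((\<lambda>n. x n (Kf n)) ` I) / Min ((\<lambda>n. x n 1) ` I) \<le> r"
    using vd unfolding valid_dist_def I_def by auto
  have K: "Kf n = 1 \<or> Kf n = 2" if "n \<in> I" for n using vdd that by auto
  have mono: "\<forall>i j. 1 \<le> i \<longrightarrow> i < j \<longrightarrow> j \<le> Kf n \<longrightarrow> x n i < x n j" if "n \<in> I" for n
    using vdd that by auto
  have x1pos: "0 < x n 1" if "n \<in> I" for n using vdd that by auto
  have ppos: "0 < p n i" if "n \<in> I" "i \<in> {1..Kf n}" for n i using vdd that by auto
  have psum: "(\<Sum>i=1..Kf n. p n i) = 1" if "n \<in> I" for n using vdd that by auto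
  have Minpos: "0 < Min ((\<lambda>n. x n 1) ` I)" using fI IN x1pos by (subst Min_gr_iff) auto
  have Hr: "x n 2 \<le> r * x n 1" if n: "n \<in> I" "Kf n = 2" for n
  proof -
    have "x n 2 \<le> Max ((\<lambda>n. x n (Kf n)) ` I)" using n fI by (metis Max_ge finite_imageI image_eqI)
    also have "\<dots> \<le> r * Min ((\<lambda>n. x n 1) ` I)" using ratio Minpos by (simp add: divide_le_eq)
    also have "\<dots> \<le> r * x n 1" using r n fI by (intro mult_left_mono Min_le) auto
    finally show ?thesis .
  qed
  have pr1_eq: "pr1 Kf x p n (x n i) = p n i" if "n \<in> I" "i \<in> {1..Kf n}" for n i
    unfolding pr1_def using idx_eq[of Kf n x i, OF mono[OF that(1)] that(2)] by simp
  have w_eq: "wbar Kf x p n (x n i) = wbar_idx Kf x p n i" if "n \<in> I" "i \<in> {1..Kf n}" for n i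
    unfolding wbar_def using idx_eq[of Kf n x i, OF mono[OF that(1)] that(2)] by simp
  have supp1: "supp Kf x n = {x n 1}" if "Kf n = 1" for n using that by (simp add: supp_def)
  have supp2: "supp Kf x n = {x n 1, x n 2}" if "Kf n = 2" for n
    using that by (auto simp: supp_def numeral_2_eq_2 le_Suc_eq)
  have psum2: "p n 1 + p n 2 = 1" if "n \<in> I" "Kf n = 2" for n
    using psum[OF that(1)] that(2) by (simp add: numeral_2_eq_2)
  have LH: "x n 1 < x n 2" if "n \<in> I" "Kf n = 2" for n using mono[OF that(1)] that(2) by auto
  have wK1: "wbar Kf x p n (x n 1) = x n 1" if "n \<in> I" "Kf n = 1" for n
    using w_eq[OF that(1), of 1] that wbar_K1[of Kf n x p] by simp
  have wK2L: "wbar Kf x p n (x n 1) = (x n 1 - x n 2 * p n 2) / p n 1" if n: "n \<in> I" "Kf n = 2" for n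
    using w_eq[OF n(1), of 1] n wbar_K2(1)[of Kf n p x, OF n(2) ppos[OF n(1)] ppos[OF n(1)] psum2[OF n] LH[OF n]]
    by simp
  have wK2H: "wbar Kf x p n (x n 2) = x n 2" if n: "n \<in> I" "Kf n = 2" for n
    using w_eq[OF n(1), of 2] n wbar_K2(2)[of Kf n p x, OF n(2) ppos[OF n(1)] ppos[OF n(1)] psum2[OF n] LH[OF n]]
    by simp
  have wle: "wbar Kf x p n y \<le> y" if n: "n \<in> I" and y: "y \<in> supp Kf x n" for n y
  proof (cases "Kf n = 1")
    case True then show ?thesis using y supp1 wK1 n by auto
  next
    case False
    then have K2: "Kf n = 2" using K n by auto
    have p1: "0 < p n 1" using ppos n K2 by auto
    have "x n 1 - x n 2 * p n 2 \<le> x n 1 - x n 1 * p n 2"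
      using LH[OF n K2] ppos[OF n, of 2] K2 by (intro diff_left_mono mult_right_mono) auto
    also have "\<dots> = x n 1 * p n 1"
    proof -
      have e: "p n 1 = 1 - p n 2" using psum2[OF n K2] by simp
      show ?thesis by (simp only: e) (simp add: algebra_simps)
    qed
    finally have "(x n 1 - x n 2 * p n 2) / p n 1 \<le> x n 1" using p1 by (simp add: divide_le_eq)
    then show ?thesis using y supp2[OF K2] wK2L[OF n K2] wK2H[OF n K2] by auto
  qed
  have prnn: "0 \<le> pr1 Kf x p n y" if n: "n \<in> I" and y: "y \<in> supp Kf x n" for n y
  proof -
    obtain i where i: "i \<in> {1..Kf n}" "y = x n i" using y unfolding supp_def by auto
    show ?thesis using pr1_eq[OF n i(1)] ppos[OF n i(1)] i by simp
  qed
  have Pnn: "0 \<le> prob_prof N Kf x p v" if v: "v \<in> profiles N Kf x" for v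
    unfolding prob_prof_def
  proof (rule prod_nonneg)
    fix n assume n: "n \<in> {1..N}"
    then have "v n \<in> supp Kf x n" using v unfolding profiles_def by auto
    then show "0 \<le> pr1 Kf x p n (v n)" using prnn n unfolding I_def by auto
  qed
  let ?P = "prob_prof N Kf x p"
  let ?w = "\<lambda>n y. max (wbar Kf x p n y) 0"
  let ?S = "profiles N Kf x"
  have pw: "(\<Sum>n\<in>I. qf calA n v * ?w n (v n)) \<le> (\<Sum>n\<in>I. Qn calA \<pi> n v * v n)" if v: "v \<in> ?S" for v
  proof -
    have al: "\<forall>A. 0 \<le> \<pi> v A" "(\<Sum>A\<in>calA. \<pi> v A) = 1"
      "\<forall>A\<in>calA. 0 < \<pi> v A \<longrightarrow> (\<forall>B\<in>calA. (\<Sum>n\<in>B. wbar Kf x p n (v n)) \<le> (\<Sum>n\<in>A. wbar Kf x p n (v n)))"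
      using opt v unfolding optimal_rule_def alloc_rule_def by auto
    have gv: "\<forall>n\<in>I. wbar Kf x p n (v n) \<le> v n"
      using v wle unfolding profiles_def I_def by (auto simp: PiE_iff)
    have h: "(\<Sum>n\<in>I. qf calA n v * max (wbar Kf x p n (v n)) 0) \<le> (\<Sum>n\<in>I. (\<Sum>A\<in>{A\<in>calA. n \<in> A}. \<pi> v A) * v n)"
      using pointwise[where calA=calA and I=I and \<pi>="\<pi> v" and g="\<lambda>n. wbar Kf x p n (v n)" and v=v] fA neA subI fI down al gv
      by blast
    then show ?thesis unfolding Qn_def .
  qed
  have step1: "(\<Sum>v\<in>?S. ?P v * (\<Sum>n\<in>I. qf calA n v * ?w n (v n))) \<le> welfare N calA Kf x p \<pi>"
    unfolding welfare_def I_def[symmetric]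
  proof (rule sum_mono)
    fix v assume "v \<in> profiles N Kf x"
    then show "?P v * (\<Sum>n\<in>I. qf calA n v * ?w n (v n)) \<le> ?P v * (\<Sum>n\<in>I. Qn calA \<pi> n v * v n)"
      using pw Pnn by (intro mult_left_mono) auto
  qed
  have step2: "(\<Sum>v\<in>?S. ?P v * (\<Sum>n\<in>I. qf calA n v * ?w n (v n)))
       = (\<Sum>n\<in>I. \<Sum>v\<in>?S. ?P v * qf calA n v * ?w n (v n))"
    by (simp add: sum_distrib_left sum.swap[of _ I] mult.assoc)
  have step4: "(\<Sum>n\<in>I. \<Sum>v\<in>?S. ?P v * qf calA n v * v n) = MSW N calA Kf x p"
  proof -
    have "(\<Sum>n\<in>I. \<Sum>v\<in>?S. ?P v * qf calA n v * v n) = (\<Sum>v\<in>?S. ?P v * (\<Sum>n\<in>I. qf calA n v * v n))"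
      by (simp add: sum_distrib_left sum.swap[of _ I] mult.assoc)
    also have "\<dots> = (\<Sum>v\<in>?S. ?P v * Wv calA v)"
      using qf_W[OF fA neA subI fI] by simp
    finally show ?thesis unfolding MSW_def Wv_def .
  qed
  have step3: "r * (\<Sum>v\<in>?S. ?P v * qf calA n v * v n) \<le> (2*r-1) * (\<Sum>v\<in>?S. ?P v * qf calA n v * ?w n (v n))"
    if n: "n \<in> I" for n
  proof -
    let ?G = "\<lambda>u. \<Prod>m\<in>I-{n}. pr1 Kf x p m (u m)"
    have S: "?S = PiE I (supp Kf x)" unfolding profiles_def I_def by simp
    have P: "?P (u(n:=y)) = pr1 Kf x p n y * ?G u" for u y
    proof -
      have "?P (u(n:=y)) = (\<Prod>m\<in>I. pr1 Kf x p m ((u(n:=y)) m))" unfolding prob_prof_def I_def by simp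
      also have "\<dots> = pr1 Kf x p n y * (\<Prod>m\<in>I-{n}. pr1 Kf x p m ((u(n:=y)) m))"
        using fI n by (simp add: prod.remove)
      also have "(\<Prod>m\<in>I-{n}. pr1 Kf x p m ((u(n:=y)) m)) = ?G u" by (intro prod.cong) auto
      finally show ?thesis .
    qed
    have inner: "r * (\<Sum>y\<in>supp Kf x n. pr1 Kf x p n y * qf calA n (u(n:=y)) * y)
        \<le> (2*r-1) * (\<Sum>y\<in>supp Kf x n. pr1 Kf x p n y * qf calA n (u(n:=y)) * ?w n y)" for u
    proof (cases "Kf n = 1")
      case True
      have q: "0 \<le> qf calA n (u(n:=x n 1))" using qf_bounds[OF fA neA] by auto
      have pp: "0 < p n 1" using ppos n True by auto
      have "r * (p n 1 * qf calA n (u(n:=x n 1)) * x n 1) \<le> (2*r-1) * (p n 1 * qf calA n (u(n:=x n 1)) * x n 1)"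
        using r q pp x1pos[OF n] by (intro mult_right_mono) auto
      then show ?thesis using True supp1 pr1_eq[OF n, of 1] wK1[OF n True] x1pos[OF n] by simp
    next
      case False
      then have K2: "Kf n = 2" using K n by auto
      let ?a = "qf calA n (u(n:=x n 1))" and ?b = "qf calA n (u(n:=x n 2))"
      have fC: "\<forall>C\<in>calA. finite C" using subI fI finite_subset by blast
      have ab: "?a \<le> ?b" using LH[OF n K2] by (intro qf_mono[OF fA neA fC]) auto
      have a0: "0 \<le> ?a" using qf_bounds[OF fA neA] by auto
      have "r * (p n 1 * ?a * x n 1 + p n 2 * ?b * x n 2)
         \<le> (2*r-1) * (p n 1 * ?a * max ((x n 1 - x n 2 * p n 2) / p n 1) 0 + p n 2 * ?b * x n 2)"
        using K2 by (intro arith_key x1pos[OF n] LH[OF n K2] Hr[OF n K2] r ppos[OF n] psum2[OF n K2] a0 ab) auto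
      moreover have "max (x n 2) 0 = x n 2" using LH[OF n K2] x1pos[OF n] by simp
      ultimately show ?thesis
        using supp2[OF K2] LH[OF n K2] pr1_eq[OF n, of 1] pr1_eq[OF n, of 2] K2
          wK2L[OF n K2] wK2H[OF n K2] by simp
    qed
    have Gnn: "0 \<le> ?G u" if u: "u \<in> PiE (I-{n}) (supp Kf x)" for u
      using u prnn by (intro prod_nonneg) auto
    have "r * (\<Sum>v\<in>?S. ?P v * qf calA n v * v n)
       = (\<Sum>u\<in>PiE (I-{n}) (supp Kf x). ?G u * (r * (\<Sum>y\<in>supp Kf x n. pr1 Kf x p n y * qf calA n (u(n:=y)) * y)))"
      unfolding S sum_PiE_split[OF n] P
      by (simp add: sum_distrib_left mult_ac)
    also have "\<dots> \<le> (\<Sum>u\<in>PiE (I-{n}) (supp Kf x). ?G u * ((2*r-1) * (\<Sum>y\<in>supp Kf x n. pr1 Kf x p n y * qf calA n (u(n:=y)) * ?w n y)))"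
      using Gnn inner by (intro sum_mono mult_left_mono) auto
    also have "\<dots> = (2*r-1) * (\<Sum>v\<in>?S. ?P v * qf calA n v * ?w n (v n))"
      unfolding S sum_PiE_split[OF n] P
      by (simp add: sum_distrib_left mult_ac)
    finally show ?thesis .
  qed
  have "r * MSW N calA Kf x p = (\<Sum>n\<in>I. r * (\<Sum>v\<in>?S. ?P v * qf calA n v * v n))"
    unfolding step4[symmetric] by (simp add: sum_distrib_left)
  also have "\<dots> \<le> (\<Sum>n\<in>I. (2*r-1) * (\<Sum>v\<in>?S. ?P v * qf calA n v * ?w n (v n)))"
    using step3 by (intro sum_mono) auto
  also have "\<dots> = (2*r-1) * (\<Sum>v\<in>?S. ?P v * (\<Sum>n\<in>I. qf calA n v * ?w n (v n)))"
    unfolding step2 by (simp add: sum_distrib_left)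
  also have "\<dots> \<le> (2*r-1) * welfare N calA Kf x p \<pi>"
    using step1 r by (intro mult_left_mono) auto
  finally have A: "r * MSW N calA Kf x p \<le> (2*r-1) * welfare N calA Kf x p \<pi>" .
  have "0 \<le> MSW N calA Kf x p" unfolding MSW_def
  proof (rule sum_nonneg)
    fix v assume v: "v \<in> ?S"
    have "0 \<le> Wv calA v" using Wv_ge[OF fA emp, of v] by simp
    then show "0 \<le> ?P v * (MAX A\<in>calA. \<Sum>n\<in>A. v n)" using Pnn[OF v] unfolding Wv_def by simp
  qed
  with A show ?thesis by simp
qed

lemma ELR_bound:
  fixes M W r :: real
  assumes "r > 1" "r * M \<le> (2*r-1) * W" "0 \<le> M"
  shows "(M - W) / M \<le> (r - 1) / (2 * r - 1)"
proof (cases "M = 0")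
  case True then show ?thesis using assms by simp
next
  case False
  then have M: "M > 0" using assms by simp
  have d: "2*r-1 > 0" using assms by simp
  have "(M - W) * (2*r-1) \<le> (r-1) * M" using assms(2) by (simp add: algebra_simps)
  then have "M - W \<le> (r-1) * M / (2*r-1)" using d by (simp add: le_divide_eq)
  then show ?thesis using M by (simp add: divide_le_eq mult.commute)
qed



lemma witness:
  fixes N :: nat and calA :: "nat set set" and r :: real
  assumes N: "N \<ge> 1"
    and sub: "\<forall>A\<in>calA. A \<subseteq> {1..N}"
    and emp: "{} \<in> calA"
    and r: "r > 1"
  shows "\<exists>Kf x p \<pi>. valid_dist N r 2 Kf x p \<and> welfare_max_optimal N calA Kf x p \<pi>"
proof -
  define I where "I = {1..N::nat}"
  have fI: "finite I" unfolding I_def by simp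
  have IN: "I \<noteq> {}" using N unfolding I_def by auto
  have subI: "\<forall>C\<in>calA. C \<subseteq> I" using sub unfolding I_def by simp
  have fA: "finite calA" using subI fI by (meson Pow_iff finite_Pow_iff finite_subset subsetI)
  have neA: "calA \<noteq> {}" using emp by auto
  define Kf :: "nat \<Rightarrow> nat" where "Kf = (\<lambda>_. 1)"
  define x :: "nat \<Rightarrow> nat \<Rightarrow> real" where "x = (\<lambda>_ _. 1)"
  define p :: "nat \<Rightarrow> nat \<Rightarrow> real" where "p = (\<lambda>_ _. 1)"
  define C0 where "C0 = (\<lambda>v. SOME C. C \<in> Mset calA v)"
  define \<pi> :: "(nat \<Rightarrow> real) \<Rightarrow> nat set \<Rightarrow> real" where "\<pi> = (\<lambda>v A. if A = C0 v then 1 else 0)"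
  have C0: "C0 v \<in> Mset calA v" for v
    unfolding C0_def using Mset_ne[OF fA neA, of v] by (simp add: some_in_eq)
  have C0A: "C0 v \<in> calA" "(\<Sum>m\<in>C0 v. v m) = Wv calA v" for v using C0[of v] unfolding Mset_def by auto
  have img1: "(\<lambda>n. (1::real)) ` I = {1}" using IN by auto
  have vd: "valid_dist N r 2 Kf x p"
    unfolding valid_dist_def Kf_def x_def p_def using r img1 by (simp add: I_def)
  have suppeq: "supp Kf x n = {1}" for n unfolding supp_def Kf_def x_def by simp
  have wb: "wbar Kf x p n 1 = 1" for n
  proof -
    have "idx Kf x n (x n 1) = 1" by (rule idx_eq) (auto simp: Kf_def)
    then have "wbar Kf x p n 1 = wbar_idx Kf x p n 1" unfolding wbar_def x_def by simp
    also have "\<dots> = x n 1" by (rule wbar_K1) (simp add: Kf_def)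
    finally show ?thesis by (simp add: x_def)
  qed
  have vprof: "v n = 1" if "v \<in> profiles N Kf x" "n \<in> I" for v n
    using that suppeq unfolding profiles_def I_def by (auto simp: PiE_iff)
  have alloc: "alloc_rule N calA Kf x \<pi>"
    unfolding alloc_rule_def
  proof (intro ballI conjI allI impI)
    fix v A
    show "0 \<le> \<pi> v A" unfolding \<pi>_def by simp
    show "A \<notin> calA \<Longrightarrow> \<pi> v A = 0" unfolding \<pi>_def using C0A(1)[of v] by auto
    show "(\<Sum>A\<in>calA. \<pi> v A) = 1" unfolding \<pi>_def using C0A(1)[of v] fA by (simp add: sum.delta')
  qed
  have opt: "optimal_rule N calA Kf x p \<pi>"
    unfolding optimal_rule_def
  proof (intro conjI alloc ballI impI allI)
    fix v A B assume v: "v \<in> profiles N Kf x" and A: "A \<in> calA" "0 < \<pi> v A" and B: "B \<in> calA"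
    have AC: "A = C0 v" using A unfolding \<pi>_def by (auto split: if_splits)
    have ww: "wbar Kf x p n (v n) = v n" if "n \<in> I" for n using vprof[OF v that] wb by simp
    have "(\<Sum>n\<in>B. wbar Kf x p n (v n)) = (\<Sum>n\<in>B. v n)" using B subI ww by (intro sum.cong) auto
    also have "\<dots> \<le> Wv calA v" using Wv_ge[OF fA B] .
    also have "\<dots> = (\<Sum>n\<in>A. v n)" using C0A(2)[of v] AC by simp
    also have "\<dots> = (\<Sum>n\<in>A. wbar Kf x p n (v n))" using A subI ww by (intro sum.cong) (auto, metis subsetD)
    finally show "(\<Sum>n\<in>B. wbar Kf x p n (v n)) \<le> (\<Sum>n\<in>A. wbar Kf x p n (v n))" .
  next
    fix v n y assume v: "v \<in> profiles N Kf x" and n: "n \<in> {1..N}" and y: "y \<in> supp Kf x n"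
      and lt: "v n < y \<and> wbar Kf x p n (v n) = wbar Kf x p n y"
    have "v n = 1" using vprof[OF v] n unfolding I_def by simp
    moreover have "y = 1" using y suppeq by simp
    ultimately show "Qn calA \<pi> n v \<le> Qn calA \<pi> n (v(n := y))" using lt by simp
  qed
  have Pnn: "0 \<le> prob_prof N Kf x p v" for v
    unfolding prob_prof_def pr1_def p_def by simp
  have welf: "welfare N calA Kf x p \<pi> = MSW N calA Kf x p"
    unfolding welfare_def MSW_def
  proof (rule sum.cong)
    fix v
    have "(\<Sum>n\<in>{1..N}. Qn calA \<pi> n v * v n) = (\<Sum>A\<in>calA. \<pi> v A * (\<Sum>n\<in>A. v n))"
      using fA sub by (intro Qn_swap) auto
    also have "\<dots> = (\<Sum>n\<in>C0 v. v n)" unfolding \<pi>_def using C0A(1)[of v] fA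
    proof -
      have "(\<Sum>A\<in>calA. (if A = C0 v then 1 else 0) * (\<Sum>n\<in>A. v n)) = (\<Sum>A\<in>calA. if A = C0 v then (\<Sum>n\<in>A. v n) else 0)"
        by (intro sum.cong) auto
      also have "\<dots> = (\<Sum>n\<in>C0 v. v n)" using C0A(1)[of v] fA by (simp add: sum.delta')
      finally show "(\<Sum>A\<in>calA. (if A = C0 v then 1 else 0) * (\<Sum>n\<in>A. v n)) = (\<Sum>n\<in>C0 v. v n)" .
    qed
    also have "\<dots> = (MAX A\<in>calA. \<Sum>n\<in>A. v n)" using C0A(2)[of v] unfolding Wv_def by simp
    finally show "prob_prof N Kf x p v * (\<Sum>n\<in>{1..N}. Qn calA \<pi> n v * v n) =
         prob_prof N Kf x p v * (MAX A\<in>calA. \<Sum>n\<in>A. v n)" by simp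
  qed simp
  have "welfare_max_optimal N calA Kf x p \<pi>"
    unfolding welfare_max_optimal_def
  proof (intro conjI opt allI impI)
    fix \<pi>' assume "optimal_rule N calA Kf x p \<pi>'"
    then have "alloc_rule N calA Kf x \<pi>'" unfolding optimal_rule_def by simp
    then show "welfare N calA Kf x p \<pi>' \<le> welfare N calA Kf x p \<pi>"
      unfolding welf using welfare_le_MSW[OF fA sub _ Pnn] by blast
  qed
  with vd show ?thesis by blast
qed

theorem proposition3:
  fixes N :: nat and calA :: "nat set set" and r :: real
  assumes "N \<ge> 1"
    and "\<forall>A\<in>calA. A \<subseteq> {1..N}"
    and "{} \<in> calA"
    and "\<forall>A\<in>calA. \<forall>B. B \<subseteq> A \<longrightarrow> B \<in> calA"
    and "\<forall>n\<in>{1..N}. \<exists>A\<in>calA. n \<in> A"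
    and "r > 1"
  shows "eta N calA r 2 \<le> (r - 1) / (2 * r - 1) \<and> (r - 1) / (2 * r - 1) \<le> 1 / 2"
proof
  show "(r - 1) / (2 * r - 1) \<le> 1 / 2" using assms(6) by (simp add: divide_le_eq)
  show "eta N calA r 2 \<le> (r - 1) / (2 * r - 1)"
    unfolding eta_def
  proof (rule cSup_least)
    show "{ELR N calA Kf x p \<pi> | Kf x p \<pi>.
       valid_dist N r 2 Kf x p \<and> welfare_max_optimal N calA Kf x p \<pi>} \<noteq> {}"
      using witness[OF assms(1,2,3,6)] by blast
  next
    fix e assume "e \<in> {ELR N calA Kf x p \<pi> | Kf x p \<pi>.
       valid_dist N r 2 Kf x p \<and> welfare_max_optimal N calA Kf x p \<pi>}"
    then obtain Kf x p \<pi> where e: "e = ELR N calA Kf x p \<pi>" "valid_dist N r 2 Kf x p"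
      "welfare_max_optimal N calA Kf x p \<pi>" by blast
    have o: "optimal_rule N calA Kf x p \<pi>" using e(3) unfolding welfare_max_optimal_def by simp
    note mb = main_bound[OF assms(1,2,3,4,6) e(2) o]
    show "e \<le> (r - 1) / (2 * r - 1)" unfolding e(1) ELR_def
      using ELR_bound[OF assms(6)] mb by blast
  qed
qed

end
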